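(* Under the hypotheses and notation of the Barron estimate (with $v$ of infinite support, $a_n,h_n\in(0,1)$, $a_n\to0$, $h_n\to0$, and $\frac{1}{a_nh_n}=o(n^\tau)$ for some $\tau\in(0,1/2)$), define the oracle measure $\tilde\mu_n$ by $f_{\tilde\mu_n}(x)=f_v(x)\big[(1-a_n)\frac{\mu(A_n(x))}{v(A_n(x))}+a_n\big]$. Then $$\lim_{n\to\infty}\sup_{x\in A_v}\Big|\frac{f_{\tilde\mu_n}(x)}{f_{\mu^*_n}(x)}-1\Big|=0,\qquad\mathbb{P}_\mu\text{-a.s.}$$
   Context: $\mathbb{X}$ is a countably infinite set; for a probability $\mu$ on $\mathbb{X}$, $f_\mu(x)=\mu(\{x\})$ and $A_\mu=\{x:f_\mu(x)>0\}$. $v$ is a probability on $\mathbb{X}$ with infinite support and $\mu\ll v$. For each $n$, $\pi_n$ is a finite partition of $\mathbb{X}$ into cells each of $v$-measure $\ge h_n$, of maximal cardinality among such partitions; $A_n(x)$ is the cell of $\pi_n$ containing $x$. Given i.i.d. $X_1,X_2,\dots\sim\mu$ with law $\mathbb{P}_\mu$ and empirical measure $\hat\mu_n(A)=\frac1n\sum_{k\le n}\mathbb{1}_A(X_k)$, the Barron estimate is $f_{\mu^*_n}(x)=f_v(x)\big[(1-a_n)\frac{\hat\mu_n(A_n(x))}{v(A_n(x))}+a_n\big]$. *)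

theory Defs
  imports "HOL-Probability.Probability" "HOL-Library.Landau_Symbols"
begin

definition v_partition :: "'a pmf \<Rightarrow> real \<Rightarrow> 'a set set \<Rightarrow> bool" where
  "v_partition v h P \<longleftrightarrow> finite P \<and> (\<forall>A\<in>P. A \<noteq> {}) \<and> disjoint P \<and> \<Union>P = UNIV
     \<and> (\<forall>A\<in>P. measure_pmf.prob v A \<ge> h)"

definition max_v_partition :: "'a pmf \<Rightarrow> real \<Rightarrow> 'a set set \<Rightarrow> bool" where
  "max_v_partition v h P \<longleftrightarrow> v_partition v h P \<and> (\<forall>Q. v_partition v h Q \<longrightarrow> card Q \<le> card P)"

definition cell :: "'a set set \<Rightarrow> 'a \<Rightarrow> 'a set" where
  "cell P x = (THE A. A \<in> P \<and> x \<in> A)"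

text \<open>Empirical measure of A from the first n observations X_1..X_n = snth 0..n-1.\<close>
definition emp_measure :: "nat \<Rightarrow> 'a stream \<Rightarrow> 'a set \<Rightarrow> real" where
  "emp_measure n \<omega> A = (1 / real n) * (\<Sum>k<n. indicator A (\<omega> !! k))"

definition barron_dens :: "'a pmf \<Rightarrow> real \<Rightarrow> 'a set set \<Rightarrow> nat \<Rightarrow> 'a stream \<Rightarrow> 'a \<Rightarrow> real" where
  "barron_dens v a P n \<omega> x = pmf v x *
     ((1 - a) * emp_measure n \<omega> (cell P x) / measure_pmf.prob v (cell P x) + a)"

definition oracle_dens :: "'a pmf \<Rightarrow> 'a pmf \<Rightarrow> real \<Rightarrow> 'a set set \<Rightarrow> 'a \<Rightarrow> real" where
  "oracle_dens v \<mu> a P x = pmf v x *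
     ((1 - a) * measure_pmf.prob \<mu> (cell P x) / measure_pmf.prob v (cell P x) + a)"

end

theory Submission
  imports Defs "HOL-Real_Asymp.Real_Asymp"
begin

lemma cell_props:
  assumes "v_partition v h P"
  shows "cell P x \<in> P \<and> x \<in> cell P x"
proof -
  from assms have U: "\<Union>P = UNIV" and D: "disjoint P" by (auto simp: v_partition_def)
  obtain A where A: "A \<in> P" "x \<in> A" using U by blast
  have "\<exists>!A. A \<in> P \<and> x \<in> A"
  proof (rule ex1I[of _ A])
    show "A \<in> P \<and> x \<in> A" using A by blast
    fix B assume "B \<in> P \<and> x \<in> B"
    with A D show "B = A" unfolding disjoint_def by blast
  qed
  then show ?thesis unfolding cell_def by (rule theI')
qed

lemma card_partition_bound:
  assumes "v_partition v h P" "h > 0"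
  shows "real (card P) * h \<le> 1"
proof -
  from assms have fin: "finite P" and U: "\<Union>P = UNIV" and D: "disjoint P"
    and H: "\<forall>A\<in>P. measure_pmf.prob v A \<ge> h" by (auto simp: v_partition_def)
  have "real (card P) * h = (\<Sum>A\<in>P. h)" by simp
  also have "\<dots> \<le> (\<Sum>A\<in>P. measure_pmf.prob v A)" using H by (intro sum_mono) auto
  also have "\<dots> = measure_pmf.prob v (\<Union>A\<in>P. A)"
    by (rule measure_pmf.finite_measure_finite_Union[symmetric])
       (use fin D in \<open>auto simp: disjoint_family_on_def disjoint_def\<close>)
  also have "\<dots> \<le> 1" by simp
  finally show ?thesis .
qed

lemma emp_nonneg: "emp_measure n \<omega> A \<ge> 0"
  unfolding emp_measure_def by (intro mult_nonneg_nonneg sum_nonneg) auto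

lemma ratio_bound:
  assumes P: "v_partition v h P" and h: "h > 0" and a: "0 < a" "a < 1"
    and x: "x \<in> set_pmf v" and e: "\<epsilon> \<ge> 0"
    and close: "\<bar>emp_measure n \<omega> (cell P x) - measure_pmf.prob \<mu> (cell P x)\<bar> \<le> \<epsilon> * a * h"
  shows "\<bar>oracle_dens v \<mu> a P x / barron_dens v a P n \<omega> x - 1\<bar> \<le> \<epsilon>"
proof -
  define A where "A = cell P x"
  have AP: "A \<in> P" using cell_props[OF P] by (simp add: A_def)
  define V where "V = measure_pmf.prob v A"
  define M where "M = measure_pmf.prob \<mu> A"
  define E where "E = emp_measure n \<omega> A"
  define p where "p = pmf v x"
  have p: "p > 0" using x by (simp add: p_def set_pmf_eq)
  have V: "V \<ge> h" using P AP by (auto simp: v_partition_def V_def)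
  have Vp: "V > 0" using V h by linarith
  have E: "E \<ge> 0" by (simp add: E_def emp_nonneg)
  have cl: "\<bar>E - M\<bar> \<le> \<epsilon> * a * h" using close by (simp add: E_def M_def A_def)
  define D where "D = (1 - a) * E / V + a"
  have D: "D \<ge> a" using a E Vp by (simp add: D_def)
  have "oracle_dens v \<mu> a P x / barron_dens v a P n \<omega> x - 1
        = ((1 - a) * M / V + a) / D - 1"
    using p by (simp add: oracle_dens_def barron_dens_def D_def A_def V_def M_def E_def p_def)
  also have "\<dots> = (1 - a) * (M - E) / V / D"
  proof -
    have Dp: "D \<noteq> 0" using D a by auto
    have "((1 - a) * M / V + a) / D - 1 = (((1 - a) * M / V + a) - D) / D"
      using Dp by (simp add: diff_divide_distrib)
    also have "((1 - a) * M / V + a) - D = (1 - a) * (M - E) / V"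
      by (simp add: D_def diff_divide_distrib right_diff_distrib)
    finally show ?thesis by simp
  qed
  finally have eq: "oracle_dens v \<mu> a P x / barron_dens v a P n \<omega> x - 1 = (1 - a) * (M - E) / V / D" .
  have "\<bar>(1 - a) * (M - E) / V / D\<bar> = (1 - a) * \<bar>M - E\<bar> / V / D"
    using a Vp D by (simp add: abs_mult abs_divide)
  also have "\<dots> \<le> \<bar>M - E\<bar> / V / D"
    using a Vp D by (intro divide_right_mono) (auto intro: mult_left_le_one_le)
  also have "\<dots> \<le> \<bar>M - E\<bar> / h / a"
    using a Vp D V h by (intro frac_le divide_nonneg_nonneg) auto
  also have "\<dots> \<le> \<epsilon>"
    using cl a h by (simp add: field_simps abs_minus_commute)
  finally show ?thesis using eq by simp
qed

lemma (in prob_space) distr_snth: "distr (stream_space M) M (\<lambda>\<omega>. \<omega> !! i) = M"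
proof -
  have "distr (stream_space M) M (\<lambda>\<omega>. \<omega> !! i)
      = distr (distr (\<Pi>\<^sub>M i\<in>UNIV. M) (stream_space M) to_stream) M (\<lambda>\<omega>. \<omega> !! i)"
    by (subst stream_space_eq_distr) simp
  also have "\<dots> = distr (\<Pi>\<^sub>M i\<in>UNIV. M) M (\<lambda>f. to_stream f !! i)"
    by (subst distr_distr) (auto simp: comp_def)
  also have "\<dots> = distr (\<Pi>\<^sub>M i\<in>UNIV. M) M (\<lambda>f. f i)"
    by (simp add: to_stream_def)
  also have "\<dots> = M"
    by (rule distr_PiM_component) (auto intro: prob_space_axioms)
  finally show ?thesis .
qed

lemma (in prob_space) distr_stake:
  assumes J: "finite J"
  shows "distr (stream_space M) (\<Pi>\<^sub>M i\<in>J. M) (\<lambda>x. \<lambda>i\<in>J. x !! i) = (\<Pi>\<^sub>M i\<in>J. M)"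
proof -
  interpret P: product_prob_space "\<lambda>_. M" UNIV ..
  have "distr (stream_space M) (\<Pi>\<^sub>M i\<in>J. M) (\<lambda>x. \<lambda>i\<in>J. x !! i)
      = distr (distr (\<Pi>\<^sub>M i\<in>UNIV. M) (stream_space M) to_stream) (\<Pi>\<^sub>M i\<in>J. M) (\<lambda>x. \<lambda>i\<in>J. x !! i)"
    by (subst stream_space_eq_distr) simp
  also have "\<dots> = distr (\<Pi>\<^sub>M i\<in>UNIV. M) (\<Pi>\<^sub>M i\<in>J. M) (\<lambda>f. \<lambda>i\<in>J. to_stream f !! i)"
    by (subst distr_distr) (auto simp: comp_def intro!: measurable_restrict)
  also have "\<dots> = distr (\<Pi>\<^sub>M i\<in>UNIV. M) (\<Pi>\<^sub>M i\<in>J. M) (\<lambda>f. restrict f J)"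
    by (simp add: to_stream_def)
  also have "\<dots> = (\<Pi>\<^sub>M i\<in>J. M)"
  proof (rule P.PiM_eqI[OF J])
    show "sets (distr (\<Pi>\<^sub>M i\<in>UNIV. M) (\<Pi>\<^sub>M i\<in>J. M) (\<lambda>f. restrict f J)) = sets (\<Pi>\<^sub>M i\<in>J. M)"
      by simp
    fix A assume A: "\<And>i. i \<in> J \<Longrightarrow> A i \<in> sets M"
    have "emeasure (distr (\<Pi>\<^sub>M i\<in>UNIV. M) (\<Pi>\<^sub>M i\<in>J. M) (\<lambda>f. restrict f J)) (Pi\<^sub>E J A)
        = emeasure (\<Pi>\<^sub>M i\<in>UNIV. M) (prod_emb UNIV (\<lambda>_. M) J (Pi\<^sub>E J A))"
      using A by (subst emeasure_distr) (auto intro!: measurable_restrict sets_PiM_I_finite J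
          simp: prod_emb_def space_PiM)
    also have "\<dots> = (\<Prod>i\<in>J. emeasure M (A i))"
      using A J by (intro emeasure_PiM_emb) (auto intro: prob_space_axioms)
    finally show "emeasure (distr (\<Pi>\<^sub>M i\<in>UNIV. M) (\<Pi>\<^sub>M i\<in>J. M) (\<lambda>f. restrict f J)) (Pi\<^sub>E J A)
        = (\<Prod>i\<in>J. emeasure M (A i))" .
  qed
  finally show ?thesis .
qed

lemma (in prob_space) indep_snth:
  assumes "finite J" "J \<noteq> {}"
  shows "prob_space.indep_vars (stream_space M) (\<lambda>_. M) (\<lambda>i \<omega>. \<omega> !! i) J"
proof -
  interpret S: prob_space "stream_space M" by (rule prob_space_stream_space)
  show ?thesis
    by (subst S.indep_vars_iff_distr_eq_PiM)
       (use assms in \<open>simp_all add: distr_snth distr_stake\<close>)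
qed


lemma (in prob_space) expectation_snth:
  assumes [measurable]: "A \<in> sets M"
  shows "prob_space.expectation (stream_space M) (\<lambda>\<omega>. indicator A (\<omega> !! k) :: real) = prob A"
proof -
  have "prob_space.expectation (stream_space M) (\<lambda>\<omega>. indicator A (\<omega> !! k) :: real)
      = integral\<^sup>L (distr (stream_space M) M (\<lambda>\<omega>. \<omega> !! k)) (indicator A)"
    by (subst integral_distr) auto
  also have "\<dots> = prob A" by (simp add: distr_snth)
  finally show ?thesis .
qed

lemma (in prob_space) hoeffding_stream:
  assumes n: "n > 0" and A[measurable]: "A \<in> sets M" and t: "t \<ge> 0"
  shows "measure (stream_space M) {\<omega>\<in>space (stream_space M).
           \<bar>(\<Sum>k<n. indicator A (\<omega> !! k)) - real n * prob A\<bar> \<ge> t} \<le> 2 * exp (-2 * t\<^sup>2 / real n)"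
proof -
  interpret S: prob_space "stream_space M" by (rule prob_space_stream_space)
  have ind: "S.indep_vars (\<lambda>_. borel) (\<lambda>k \<omega>. indicator A (\<omega> !! k) :: real) {..<n}"
    using S.indep_vars_compose2[OF indep_snth[of "{..<n}"], of "\<lambda>_ x. indicator A x :: real" "\<lambda>_. borel"]
    using n by auto
  interpret H: Hoeffding_ineq "stream_space M" "{..<n}" "\<lambda>k \<omega>. indicator A (\<omega> !! k) :: real"
     "\<lambda>_. 0" "\<lambda>_. 1" "\<Sum>k<n. S.expectation (\<lambda>\<omega>. indicator A (\<omega> !! k) :: real)"
    by unfold_locales (auto simp: ind)
  have mu: "(\<Sum>k<n. S.expectation (\<lambda>\<omega>. indicator A (\<omega> !! k) :: real)) = real n * prob A"
    by (simp add: expectation_snth)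
  show ?thesis
    using H.Hoeffding_ineq_abs_ge[OF t] n by (simp add: mu)
qed


lemma summable_bound:
  fixes a h :: "nat \<Rightarrow> real" and c :: "nat \<Rightarrow> nat"
  assumes \<tau>: "0 < \<tau>" "\<tau> < 1/2" and e: "\<epsilon> > 0"
    and rate: "eventually (\<lambda>n. 1 / (a n * h n) \<le> real n powr \<tau>) sequentially"
    and a: "\<And>n. 0 < a n \<and> a n < 1" and h: "\<And>n. 0 < h n \<and> h n < 1"
    and c: "\<And>n. real (c n) * h n \<le> 1"
  shows "summable (\<lambda>n. real (c n) * (2 * exp (-2 * (real n * \<epsilon> * a n * h n)\<^sup>2 / real n)))"
proof -
  have lim: "(\<lambda>n::nat. real n powr (\<tau> + 2) * exp (- (2 * \<epsilon>\<^sup>2) * real n powr (1 - 2 * \<tau>))) \<longlonglongrightarrow> 0"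
    using \<tau> e by real_asymp
  have ev: "eventually (\<lambda>n. real n powr (\<tau> + 2) * exp (- (2 * \<epsilon>\<^sup>2) * real n powr (1 - 2 * \<tau>)) < 1) sequentially"
    using order_tendstoD(2)[OF lim] by simp
  have "eventually (\<lambda>n. norm (real (c n) * (2 * exp (-2 * (real n * \<epsilon> * a n * h n)\<^sup>2 / real n)))
          \<le> 2 * inverse (real n ^ 2)) sequentially"
    using ev rate eventually_gt_at_top[of 0]
  proof eventually_elim
    case (elim n)
    have n: "real n > 0" using elim by simp
    have ah: "a n * h n > 0" using a[of n] h[of n] by simp
    have "h n \<ge> a n * h n" using a[of n] h[of n] by simp
    have cn: "real (c n) \<le> real n powr \<tau>"
    proof -
      have "real (c n) \<le> 1 / h n" using c[of n] h[of n] by (simp add: field_simps)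
      also have "\<dots> \<le> 1 / (a n * h n)" using a[of n] h[of n] ah
        by (intro divide_left_mono) (auto intro: mult_left_le_one_le)
      also have "\<dots> \<le> real n powr \<tau>" using elim by simp
      finally show ?thesis .
    qed
    have ahb: "a n * h n \<ge> real n powr (-\<tau>)"
    proof -
      have "1 \<le> real n powr \<tau> * (a n * h n)" using elim(2) ah by (simp add: field_simps)
      then have "real n powr (-\<tau>) * 1 \<le> real n powr (-\<tau>) * (real n powr \<tau> * (a n * h n))"
        by (intro mult_left_mono) auto
      also have "\<dots> = a n * h n" using n by (simp add: powr_minus field_simps)
      finally show ?thesis by simp
    qed
    have sq: "(a n * h n)\<^sup>2 \<ge> real n powr (-2 * \<tau>)"
    proof -
      have "(real n powr (-\<tau>))\<^sup>2 \<le> (a n * h n)\<^sup>2" using ahb by (intro power_mono) auto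
      moreover have "(real n powr (-\<tau>))\<^sup>2 = real n powr (-2 * \<tau>)"
        using n by (simp add: power2_eq_square powr_add[symmetric])
      ultimately show ?thesis by simp
    qed
    have expo: "(real n * \<epsilon> * a n * h n)\<^sup>2 / real n = \<epsilon>\<^sup>2 * real n * (a n * h n)\<^sup>2"
      using n by (simp add: power2_eq_square field_simps)
    have "real n powr (1 - 2 * \<tau>) = real n powr 1 * real n powr (-2 * \<tau>)"
      by (subst powr_add[symmetric]) simp
    then have "\<epsilon>\<^sup>2 * real n powr (1 - 2 * \<tau>) = \<epsilon>\<^sup>2 * (real n * real n powr (-2 * \<tau>))"
      using n by simp
    also have "\<dots> \<le> \<epsilon>\<^sup>2 * (real n * (a n * h n)\<^sup>2)"
      using sq n by (intro mult_left_mono) auto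
    finally have le1: "\<epsilon>\<^sup>2 * real n powr (1 - 2 * \<tau>) \<le> \<epsilon>\<^sup>2 * real n * (a n * h n)\<^sup>2" by simp
    have ex: "exp (-2 * (real n * \<epsilon> * a n * h n)\<^sup>2 / real n) \<le> exp (- (2 * \<epsilon>\<^sup>2) * real n powr (1 - 2 * \<tau>))"
    proof -
      have "-2 * (real n * \<epsilon> * a n * h n)\<^sup>2 / real n = -2 * ((real n * \<epsilon> * a n * h n)\<^sup>2 / real n)"
        by simp
      also have "\<dots> \<le> - (2 * \<epsilon>\<^sup>2) * real n powr (1 - 2 * \<tau>)"
        unfolding expo using le1 by simp
      finally show ?thesis by simp
    qed
    have "norm (real (c n) * (2 * exp (-2 * (real n * \<epsilon> * a n * h n)\<^sup>2 / real n)))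
        = real (c n) * (2 * exp (-2 * (real n * \<epsilon> * a n * h n)\<^sup>2 / real n))" by simp
    also have "\<dots> \<le> real n powr \<tau> * (2 * exp (- (2 * \<epsilon>\<^sup>2) * real n powr (1 - 2 * \<tau>)))"
      using cn ex by (intro mult_mono) auto
    also have "\<dots> = 2 * (real n powr (\<tau> + 2) * exp (- (2 * \<epsilon>\<^sup>2) * real n powr (1 - 2 * \<tau>))) / real n ^ 2"
      using n by (simp add: powr_add power2_eq_square)
    also have "\<dots> \<le> 2 * 1 / real n ^ 2"
      using elim(1) n by (intro divide_right_mono mult_left_mono) auto
    finally show ?case by (simp add: field_simps)
  qed
  then obtain N where N: "\<And>n. n \<ge> N \<Longrightarrow> norm (real (c n) * (2 * exp (-2 * (real n * \<epsilon> * a n * h n)\<^sup>2 / real n)))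
          \<le> 2 * inverse (real n ^ 2)"
    by (auto simp: eventually_sequentially)
  show ?thesis
  proof (rule summable_comparison_test')
    show "summable (\<lambda>n. 2 * inverse (real n ^ 2))"
      by (intro summable_mult inverse_power_summable) auto
  qed (use N in blast)
qed


theorem mainTheorem5:
  fixes v \<mu> :: "'a::countable pmf" and a h :: "nat \<Rightarrow> real" and \<pi> :: "nat \<Rightarrow> 'a set set"
  assumes X_inf: "infinite (UNIV :: 'a set)"
    and v_inf: "infinite (set_pmf v)"
    and abs_cont: "set_pmf \<mu> \<subseteq> set_pmf v"
    and a_range: "\<And>n. 0 < a n \<and> a n < 1"
    and h_range: "\<And>n. 0 < h n \<and> h n < 1"
    and a_lim: "a \<longlonglongrightarrow> 0"
    and h_lim: "h \<longlonglongrightarrow> 0"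
    and rate: "\<exists>\<tau>::real. 0 < \<tau> \<and> \<tau> < 1/2 \<and>
                 (\<lambda>n. 1 / (a n * h n)) \<in> o(\<lambda>n. real n powr \<tau>)"
    and part: "\<And>n. max_v_partition v (h n) (\<pi> n)"
  shows "AE \<omega> in stream_space (measure_pmf \<mu>).
           (\<lambda>n. SUP x\<in>set_pmf v. ereal \<bar>oracle_dens v \<mu> (a n) (\<pi> n) x
                                      / barron_dens v (a n) (\<pi> n) n \<omega> x - 1\<bar>)
           \<longlonglongrightarrow> 0"
proof -
  obtain \<tau> :: real where \<tau>: "0 < \<tau>" "\<tau> < 1/2" and o: "(\<lambda>n. 1 / (a n * h n)) \<in> o(\<lambda>n. real n powr \<tau>)"
    using rate by blast
  have rate': "eventually (\<lambda>n. 1 / (a n * h n) \<le> real n powr \<tau>) sequentially"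
    using landau_o.smallD[OF o zero_less_one]
  proof eventually_elim
    case (elim n)
    have "a n * h n > 0" using a_range[of n] h_range[of n] by simp
    then show ?case using elim by simp
  qed
  have vp: "\<And>n. v_partition v (h n) (\<pi> n)" using part by (simp add: max_v_partition_def)
  have finP: "\<And>n. finite (\<pi> n)" using vp by (simp add: v_partition_def)
  define S where "S = stream_space (measure_pmf \<mu>)"
  interpret S: prob_space S unfolding S_def by (rule prob_space.prob_space_stream_space[OF measure_pmf.prob_space_axioms])
  define eps :: "nat \<Rightarrow> real" where "eps m = 1 / real (Suc m)" for m
  have eps: "eps m > 0" for m by (simp add: eps_def)
  define E where "E m n = (\<Union>A\<in>\<pi> n. {\<omega>\<in>space S. \<bar>(\<Sum>k<n. indicator A (\<omega> !! k)) - real n * measure_pmf.prob \<mu> A\<bar>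
                  \<ge> real n * eps m * a n * h n})" for m n
  have Esets: "E m n \<in> sets S" for m n
    unfolding E_def using finP[of n] by (intro sets.finite_UN) (auto simp: S_def)
  have Ebound: "measure S (E m n) \<le> real (card (\<pi> n)) * (2 * exp (-2 * (real n * eps m * a n * h n)\<^sup>2 / real n))"
    if n: "n > 0" for m n
  proof -
    have "measure S (E m n) \<le> (\<Sum>A\<in>\<pi> n. measure S {\<omega>\<in>space S. \<bar>(\<Sum>k<n. indicator A (\<omega> !! k)) - real n * measure_pmf.prob \<mu> A\<bar>
                  \<ge> real n * eps m * a n * h n})"
      unfolding E_def using finP[of n] by (intro S.finite_measure_subadditive_finite) (auto simp: S_def)
    also have "\<dots> \<le> (\<Sum>A\<in>\<pi> n. 2 * exp (-2 * (real n * eps m * a n * h n)\<^sup>2 / real n))"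
      unfolding S_def
      by (intro sum_mono prob_space.hoeffding_stream[OF measure_pmf.prob_space_axioms] n)
         (use eps[of m] a_range[of n] h_range[of n] in auto)
    finally show ?thesis by simp
  qed
  have summ: "summable (\<lambda>n. measure S (E m n))" for m
  proof (rule summable_comparison_test')
    show "summable (\<lambda>n. real (card (\<pi> n)) * (2 * exp (-2 * (real n * eps m * a n * h n)\<^sup>2 / real n)))"
      by (rule summable_bound[OF \<tau> eps rate' a_range h_range])
         (use card_partition_bound[OF vp] h_range in auto)
    show "norm (measure S (E m n)) \<le> real (card (\<pi> n)) * (2 * exp (-2 * (real n * eps m * a n * h n)\<^sup>2 / real n))"
      if "n \<ge> 1" for n using Ebound[of n m] that by simp
  qed
  have AEm: "AE \<omega> in S. eventually (\<lambda>n. \<omega> \<in> space S - E m n) sequentially" for m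
    by (rule borel_cantelli_AE1) (use Esets summ in \<open>auto simp: S.emeasure_eq_measure\<close>)
  have AEall: "AE \<omega> in S. \<forall>m. eventually (\<lambda>n. \<omega> \<in> space S - E m n) sequentially"
    using AEm by (simp add: AE_all_countable)
  show ?thesis
    unfolding S_def[symmetric]
    using AEall
  proof eventually_elim
    case (elim \<omega>)
    note H = elim
    define F where "F n = (SUP x\<in>set_pmf v. ereal \<bar>oracle_dens v \<mu> (a n) (\<pi> n) x
                                      / barron_dens v (a n) (\<pi> n) n \<omega> x - 1\<bar>)" for n
    obtain x0 where x0: "x0 \<in> set_pmf v" using set_pmf_not_empty[of v] by blast
    have F0: "F n \<ge> 0" for n
      unfolding F_def by (rule order_trans[OF _ SUP_upper[OF x0]]) simp
    have Fm: "eventually (\<lambda>n. F n \<le> ereal (eps m)) sequentially" for m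
      using H[rule_format, of m] eventually_gt_at_top[of 0]
    proof eventually_elim
      case (elim n)
      show ?case unfolding F_def
      proof (rule SUP_least)
        fix x assume x: "x \<in> set_pmf v"
        define A where "A = cell (\<pi> n) x"
        have AP: "A \<in> \<pi> n" using cell_props[OF vp] by (simp add: A_def)
        have "\<not> \<bar>(\<Sum>k<n. indicator A (\<omega> !! k)) - real n * measure_pmf.prob \<mu> A\<bar> \<ge> real n * eps m * a n * h n"
          using elim(1) AP unfolding E_def by blast
        then have lt: "\<bar>(\<Sum>k<n. indicator A (\<omega> !! k)) - real n * measure_pmf.prob \<mu> A\<bar> < real n * (eps m * a n * h n)"
          by (simp add: mult.assoc)
        have "emp_measure n \<omega> A - measure_pmf.prob \<mu> A
            = ((\<Sum>k<n. indicator A (\<omega> !! k)) - real n * measure_pmf.prob \<mu> A) / real n"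
          using elim(2) by (simp add: emp_measure_def field_simps)
        then have "\<bar>emp_measure n \<omega> A - measure_pmf.prob \<mu> A\<bar>
            = \<bar>(\<Sum>k<n. indicator A (\<omega> !! k)) - real n * measure_pmf.prob \<mu> A\<bar> / real n"
          by simp
        also have "\<dots> \<le> eps m * a n * h n"
          using lt elim(2) by (simp add: divide_le_eq mult.commute)
        finally have cl: "\<bar>emp_measure n \<omega> A - measure_pmf.prob \<mu> A\<bar> \<le> eps m * a n * h n" .
        have "\<bar>oracle_dens v \<mu> (a n) (\<pi> n) x / barron_dens v (a n) (\<pi> n) n \<omega> x - 1\<bar> \<le> eps m"
          by (rule ratio_bound[OF vp _ _ _ x]) (use h_range[of n] a_range[of n] eps[of m] cl in \<open>auto simp: A_def\<close>)
        then show "ereal \<bar>oracle_dens v \<mu> (a n) (\<pi> n) x / barron_dens v (a n) (\<pi> n) n \<omega> x - 1\<bar> \<le> ereal (eps m)"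
          by simp
      qed
    qed
    have "F \<longlonglongrightarrow> 0"
    proof (rule order_tendstoI)
      fix y :: ereal assume "y < 0"
      then show "eventually (\<lambda>n. y < F n) sequentially"
        by (intro always_eventually allI less_le_trans[OF \<open>y < 0\<close> F0])
    next
      fix y :: ereal assume y: "0 < y"
      obtain m where m: "ereal (eps m) < y"
      proof (cases y)
        case (real r)
        with y have "r > 0" by simp
        then obtain m where "1 / real (Suc m) < r" by (rule nat_approx_posE)
        then show ?thesis using that[of m] real by (simp add: eps_def)
      next
        case PInf then show ?thesis using that[of 0] by simp
      next
        case MInf then show ?thesis using y by simp
      qed
      show "eventually (\<lambda>n. F n < y) sequentially"
        using Fm[of m] by (rule eventually_mono) (rule le_less_trans[OF _ m])
    qed
    then show ?case unfolding F_def[abs_def] .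
  qed
qed

end
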